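(* Let $n=2m+1$ with $m\ge1$, let $a,b,c,d\in\mathbb{C}$, and suppose $T_n$ (degree $n$) and $U_{n-2}$ (degree at most $n-2$) satisfy $T_n^2-HU_{n-2}^2=1$ with $$T_n(z)=1-\frac{2(z-d)\prod_{j=1}^{m}(z-x_j)^2}{(a-d)\prod_{j=1}^m(a-x_j)^2}=-1+\frac{2(z-a)(z-b)(z-c)\prod_{j=1}^{m-1}(z-y_j)^2}{(d-a)(d-b)(d-c)\prod_{j=1}^{m-1}(d-y_j)^2}$$ for some $x_1,\dots,x_m,y_1,\dots,y_{m-1}\in\mathbb{C}$. Put $s_k:=\tfrac12\bigl(a^k+b^k+c^k+d^k\bigr)$, $k=1,\dots,2m$, and form $F_k,\mathbf F,\mathbf F_i$ with $\nu=m+1$, $\mu=m-1$. Then $\det\mathbf F\neq0$ and $y_1,\dots,y_{m-1}$ (with multiplicity) are exactly the zeros of the polynomial $$y^{m-1}\det\mathbf F+y^{m-2}\det\mathbf F_1+\dots+y\det\mathbf F_{m-2}+\det\mathbf F_{m-1}.$$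
   Context: $H(z)=(z-a)(z-b)(z-c)(z-d)$. Given complex numbers $s_1,s_2,\dots$, set $F_0:=1$, $F_k:=0$ for $k<0$, and for $k\ge1$, $F_k:=\frac{(-1)^k}{k!}\det M_k$ where $M_k$ is the $k\times k$ matrix with entry $s_{i-j+1}$ for $j\le i$, entry $i$ at position $(i,i+1)$, and $0$ elsewhere. For integers $\nu\ge0,\mu\ge0$, $\mathbf F$ is the $\mu\times\mu$ matrix with $(i,j)$ entry $F_{\nu+i-j}$, and $\mathbf F_i$ ($1\le i\le\mu$) is $\mathbf F$ with its $i$-th column replaced by $(-F_{\nu+1},\dots,-F_{\nu+\mu})^T$. Convention: if $\mu=0$, $\det\mathbf F:=1$ (so for $m=1$ the polynomial is the nonzero constant $1$ and there are no $y_j$). The $x_j,y_j$ are the zeros of $U_{n-2}$, i.e. the extremal points of $T_n$ on $T_n^{-1}([-1,1])$. *)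

theory Defs
  imports "HOL-Computational_Algebra.Polynomial" "Jordan_Normal_Form.Determinant"
begin

definition psum :: "complex \<Rightarrow> complex \<Rightarrow> complex \<Rightarrow> complex \<Rightarrow> nat \<Rightarrow> complex" where
  "psum a b c d k = (a^k + b^k + c^k + d^k) / 2"

text \<open>The k x k matrix M_k (0-based indices; entry (i,j) corresponds to (i+1,j+1)):
  s_{i-j+1} for j <= i, i at position (i,i+1), 0 elsewhere.\<close>
definition Mk :: "(nat \<Rightarrow> complex) \<Rightarrow> nat \<Rightarrow> complex mat" where
  "Mk s k = mat k k (\<lambda>(i,j). if j \<le> i then s (i - j + 1)
                             else if j = i + 1 then of_nat (i + 1) else 0)"

definition Fk :: "(nat \<Rightarrow> complex) \<Rightarrow> int \<Rightarrow> complex" where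
  "Fk s k = (if k < 0 then 0 else if k = 0 then 1
             else (-1) ^ nat k / of_nat (fact (nat k)) * det (Mk s (nat k)))"

definition Fmat :: "(nat \<Rightarrow> complex) \<Rightarrow> nat \<Rightarrow> nat \<Rightarrow> complex mat" where
  "Fmat s \<nu> \<mu> = mat \<mu> \<mu> (\<lambda>(i,j). Fk s (int \<nu> + int i - int j))"

definition Fmat_col :: "(nat \<Rightarrow> complex) \<Rightarrow> nat \<Rightarrow> nat \<Rightarrow> nat \<Rightarrow> complex mat" where
  "Fmat_col s \<nu> \<mu> i = mat \<mu> \<mu> (\<lambda>(r,c). if c + 1 = i then - Fk s (int \<nu> + int r + 1)
                                         else Fk s (int \<nu> + int r - int c))"

definition Fpoly :: "(nat \<Rightarrow> complex) \<Rightarrow> nat \<Rightarrow> nat \<Rightarrow> complex poly" where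
  "Fpoly s \<nu> \<mu> = monom (det (Fmat s \<nu> \<mu>)) \<mu>
      + (\<Sum>i = 1..\<mu>. monom (det (Fmat_col s \<nu> \<mu> i)) (\<mu> - i))"

end

theory Submission
  imports Defs "HOL-Computational_Algebra.Polynomial_FPS"
begin

definition Nm :: "(nat \<Rightarrow> complex) \<Rightarrow> nat \<Rightarrow> (nat \<Rightarrow> complex) \<Rightarrow> complex mat" where
 "Nm s k f = mat k k (\<lambda>(i,j). if i = k - 1 then f (k-1-j) else if j \<le> i then s (i-j+1)
      else if j = i+1 then of_nat (i+1) else 0)"

lemma Nm_rec:
  "det (Nm s (Suc (Suc l)) f) = f 0 * det (Mk s (Suc l)) - of_nat (Suc l) * det (Nm s (Suc l) (\<lambda>i. f (Suc i)))"
proof -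
  let ?A = "Nm s (Suc (Suc l)) f"
  have A: "?A \<in> carrier_mat (Suc (Suc l)) (Suc (Suc l))" by (simp add: Nm_def)
  have "det ?A = (\<Sum>i<Suc (Suc l). ?A $$ (i, Suc l) * cofactor ?A i (Suc l))"
    by (rule laplace_expansion_column[OF A]) simp
  also have "\<dots> = (\<Sum>i<l. ?A $$ (i, Suc l) * cofactor ?A i (Suc l)) + ?A $$ (l, Suc l) * cofactor ?A l (Suc l)
      + ?A $$ (Suc l, Suc l) * cofactor ?A (Suc l) (Suc l)"
    by simp
  also have "(\<Sum>i<l. ?A $$ (i, Suc l) * cofactor ?A i (Suc l)) = 0"
    by (rule sum.neutral) (auto simp: Nm_def)
  finally have e: "det ?A = ?A $$ (l, Suc l) * cofactor ?A l (Suc l)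
      + ?A $$ (Suc l, Suc l) * cofactor ?A (Suc l) (Suc l)" by simp
  have d1: "mat_delete ?A l (Suc l) = Nm s (Suc l) (\<lambda>i. f (Suc i))"
    by (rule eq_matI) (auto simp: Nm_def mat_delete_def Suc_diff_le)
  have d2: "mat_delete ?A (Suc l) (Suc l) = Mk s (Suc l)"
    by (rule eq_matI) (auto simp: Nm_def Mk_def mat_delete_def)
  show ?thesis unfolding e cofactor_def d1 d2 by (simp add: Nm_def)
qed

lemma detMk: "det (Mk s l) = (-1)^l * fact l * Fk s (int l)"
proof (cases "l = 0")
  case True
  then show ?thesis by (simp add: Fk_def Mk_def)
next
  case False
  then show ?thesis by (simp add: Fk_def)
qed

lemma det_Nm1: "det (Nm s (Suc 0) f) = f 0"
proof -
  let ?A = "Nm s (Suc 0) f"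
  have A: "?A \<in> carrier_mat 1 1" by (simp add: Nm_def)
  have "det ?A = (\<Sum>i<1. ?A $$ (i, 0) * cofactor ?A i 0)"
    by (rule laplace_expansion_column[OF A]) simp
  also have "mat_delete ?A 0 0 \<in> carrier_mat 0 0" by (simp add: mat_delete_def Nm_def)
  then have "det (mat_delete ?A 0 0) = 1" by simp
  then have "(\<Sum>i<1. ?A $$ (i, 0) * cofactor ?A i 0) = f 0" by (simp add: cofactor_def Nm_def)
  finally show ?thesis .
qed

lemma detN: "det (Nm s (Suc k) f) = (-1)^k * fact k * (\<Sum>j\<le>k. f j * Fk s (int (k-j)))"
proof (induction k arbitrary: f)
  case 0
  then show ?case by (simp add: det_Nm1 Fk_def)
next
  case (Suc k)
  have "det (Nm s (Suc (Suc k)) f) = f 0 * det (Mk s (Suc k)) - of_nat (Suc k) * det (Nm s (Suc k) (\<lambda>i. f (Suc i)))"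
    by (rule Nm_rec)
  also have "\<dots> = f 0 * ((-1)^(Suc k) * fact (Suc k) * Fk s (int (Suc k)))
     - of_nat (Suc k) * ((-1)^k * fact k * (\<Sum>j\<le>k. f (Suc j) * Fk s (int (k-j))))"
    by (simp only: detMk Suc.IH)
  also have "\<dots> = (-1)^(Suc k) * fact (Suc k) * (f 0 * Fk s (int (Suc k)) + (\<Sum>j\<le>k. f (Suc j) * Fk s (int (k-j))))"
    by (simp add: algebra_simps)
  also have "(f 0 * Fk s (int (Suc k)) + (\<Sum>j\<le>k. f (Suc j) * Fk s (int (k-j)))) = (\<Sum>j\<le>Suc k. f j * Fk s (int (Suc k-j)))"
    by (subst sum.atMost_Suc_shift) simp
  finally show ?case .
qed

lemma Mk_Nm: "Mk s (Suc k) = Nm s (Suc k) (\<lambda>j. s (Suc j))"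
  by (rule eq_matI) (auto simp: Nm_def Mk_def Suc_diff_le)

lemma aux_fact: "(-1)^(Suc k) / (fact (Suc k)::complex) * ((-1)^k * fact k * X) = - X / of_nat (Suc k)"
proof -
  have f: "(fact (Suc k)::complex) = of_nat (Suc k) * fact k" by (rule fact_Suc)
  have nz: "(fact k :: complex) \<noteq> 0" by simp
  have p: "(-1::complex)^(Suc k) * (-1)^k = -1"
    by (metis mult.commute mult_minus1_right power_Suc power_add_numeral2 power_minus1_even semiring_norm(2)
         left_minus_one_mult_self power_add)
  have "(-1)^(Suc k) / (fact (Suc k)::complex) * ((-1)^k * fact k * X) = ((-1)^(Suc k) * (-1)^k) * X * (fact k / fact (Suc k))"
    by (simp add: field_simps)
  also have "fact k / fact (Suc k) = (1::complex) / of_nat (Suc k)" unfolding f using nz by (simp add: field_simps del: of_nat_Suc)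
  finally show ?thesis unfolding p by simp
qed

lemma Fk_rec: "Fk s (int (Suc k)) = - (\<Sum>j\<le>k. s (Suc j) * Fk s (int (k-j))) / of_nat (Suc k)"
proof -
  have "Fk s (int (Suc k)) = (-1)^(Suc k) / fact (Suc k) * det (Mk s (Suc k))"
    unfolding Fk_def by (simp only: nat_int) (simp add: distrib_right)
  also have "\<dots> = (-1)^(Suc k) / fact (Suc k) * ((-1)^k * fact k * (\<Sum>j\<le>k. s (Suc j) * Fk s (int (k-j))))"
    by (simp only: Mk_Nm detN)
  also have "\<dots> = - (\<Sum>j\<le>k. s (Suc j) * Fk s (int (k-j))) / of_nat (Suc k)"
    by (rule aux_fact)
  finally show ?thesis .
qed

no_notation vec_index (infixl \<open>$\<close> 100)
notation vec_index (infixl \<open>$v\<close> 100)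
unbundle fps_syntax

definition Gf :: "(nat \<Rightarrow> complex) \<Rightarrow> complex fps" where
  "Gf s = Abs_fps (\<lambda>k. Fk s (int k))"

definition Sf :: "(nat \<Rightarrow> complex) \<Rightarrow> complex fps" where
  "Sf s = Abs_fps (\<lambda>i. s (Suc i))"

lemma derivG: "fps_deriv (Gf s) = - (Sf s * Gf s)"
proof (rule fps_ext)
  fix k
  have "fps_deriv (Gf s) $ k = of_nat (Suc k) * Fk s (int (Suc k))" by (simp add: Gf_def)
  also have "\<dots> = - (\<Sum>j\<le>k. s (Suc j) * Fk s (int (k-j)))"
    unfolding Fk_rec by (simp del: of_nat_Suc)
  also have "(\<Sum>j\<le>k. s (Suc j) * Fk s (int (k-j))) = (Sf s * Gf s) $ k"
    by (simp add: fps_mult_nth Gf_def Sf_def atLeast0AtMost)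
  finally show "fps_deriv (Gf s) $ k = (- (Sf s * Gf s)) $ k" by simp
qed

lemma ode_unique:
  fixes F1 F2 K :: "complex fps"
  assumes "fps_deriv F1 = - (K * F1)" "fps_deriv F2 = - (K * F2)" "F1 $ 0 = F2 $ 0"
  shows "F1 = F2"
proof -
  have "\<forall>i\<le>n. F1 $ i = F2 $ i" for n
  proof (induction n)
    case 0 then show ?case using assms(3) by simp
  next
    case (Suc n)
    have e1: "of_nat (Suc n) * F1 $ Suc n = - (K * F1) $ n"
      using arg_cong[OF assms(1), of "\<lambda>f. f $ n"] by simp
    have e2: "(K * F1) $ n = (K * F2) $ n"
      unfolding fps_mult_nth using Suc.IH by (intro sum.cong) auto
    have e3: "- (K * F2) $ n = of_nat (Suc n) * F2 $ Suc n"
      using arg_cong[OF assms(2), of "\<lambda>f. f $ n"] by simp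
    have "of_nat (Suc n) * F1 $ Suc n = of_nat (Suc n) * F2 $ Suc n" using e1 e2 e3 by simp
    then have "F1 $ Suc n = F2 $ Suc n" by (simp del: of_nat_Suc)
    then show ?case using Suc.IH le_Suc_eq by auto
  qed
  then show ?thesis by (intro fps_ext) auto
qed

definition Lf :: "complex \<Rightarrow> complex fps" where
  "Lf r = 1 - fps_const r * fps_X"

definition Af :: "complex \<Rightarrow> complex fps" where
  "Af r = Abs_fps (\<lambda>i. r ^ Suc i)"

lemma LA: "Lf r * Af r = fps_const r"
proof (rule fps_ext)
  fix n
  show "(Lf r * Af r) $ n = fps_const r $ n"
    by (cases n) (auto simp: Lf_def Af_def algebra_simps)
qed

lemma Sf_psum: "fps_const 2 * Sf (psum a b c d) = Af a + Af b + Af c + Af d"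
  by (rule fps_ext) (simp add: Sf_def Af_def psum_def)

lemma G_sq: "Gf (psum a b c d) * Gf (psum a b c d) = Lf a * Lf b * Lf c * Lf d"
proof (rule ode_unique[where K = "fps_const 2 * Sf (psum a b c d)"])
  let ?G = "Gf (psum a b c d)" and ?S = "Sf (psum a b c d)"
  show "fps_deriv (?G * ?G) = - (fps_const 2 * ?S * (?G * ?G))"
    by (simp add: derivG algebra_simps)
  have dL: "fps_deriv (Lf r) = - fps_const r" for r by (simp add: Lf_def)
  have "fps_const 2 * ?S * (Lf a * Lf b * Lf c * Lf d) =
     (Lf a * Af a) * Lf b * Lf c * Lf d + (Lf b * Af b) * Lf a * Lf c * Lf d
     + (Lf c * Af c) * Lf a * Lf b * Lf d + (Lf d * Af d) * Lf a * Lf b * Lf c"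
    unfolding Sf_psum by (simp add: algebra_simps)
  also have "\<dots> = - fps_deriv (Lf a * Lf b * Lf c * Lf d)"
    unfolding LA by (simp add: dL algebra_simps del: fps_const_neg)
  finally show "fps_deriv (Lf a * Lf b * Lf c * Lf d) = - (fps_const 2 * ?S * (Lf a * Lf b * Lf c * Lf d))"
    by simp
  show "(?G * ?G) $ 0 = (Lf a * Lf b * Lf c * Lf d) $ 0"
    by (simp add: Gf_def Lf_def Fk_def)
qed

lemma poly_eq_nonzero:
  fixes p q :: "complex poly"
  assumes "\<And>t. t \<noteq> 0 \<Longrightarrow> poly p t = poly q t"
  shows "p = q"
proof (rule ccontr)
  assume "p \<noteq> q"
  then have "p - q \<noteq> 0" by simp
  then have fin: "finite {t. poly (p - q) t = 0}" by (rule poly_roots_finite)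
  have "UNIV - {0} \<subseteq> {t. poly (p - q) t = 0}" using assms by auto
  with fin have "finite (UNIV - {0::complex})" by (rule finite_subset[rotated])
  then show False by (simp add: infinite_UNIV_char_0)
qed

lemma refl_prod:
  fixes t :: complex
  assumes "t \<noteq> 0" "finite A"
  shows "t^(2*card A) * (\<Prod>j\<in>A. (1/t - y j)^2) = (\<Prod>j\<in>A. (1 - y j * t))^2"
  using assms(2)
proof (induction A rule: finite_induct)
  case empty then show ?case by simp
next
  case (insert i A)
  have c: "card (insert i A) = Suc (card A)" using insert by simp
  have p2: "t^(2*Suc k) = t^2 * t^(2*k)" for k by (metis mult_Suc_right power_add)
  have "t^(2*card (insert i A)) * (\<Prod>j\<in>insert i A. (1/t - y j)^2)
      = (t * (1/t - y i))^2 * (t^(2*card A) * (\<Prod>j\<in>A. (1/t - y j)^2))"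
    unfolding c prod.insert[OF insert.hyps] p2 by (simp add: power_mult_distrib mult_ac)
  also have "t * (1/t - y i) = 1 - y i * t" using assms(1) by (simp add: field_simps)
  finally show ?case unfolding prod.insert[OF insert.hyps] insert.IH by (simp add: power_mult_distrib)
qed

lemma deg_prod_lin:
  assumes "finite A"
  shows "degree (\<Prod>j\<in>A. [:1, - y j:] :: complex poly) \<le> card A"
  using assms
proof (induction A rule: finite_induct)
  case empty then show ?case by simp
next
  case (insert i A)
  have "degree (\<Prod>j\<in>insert i A. [:1, - y j:] :: complex poly) \<le> degree [:1, - y i:] + degree (\<Prod>j\<in>A. [:1, - y j:] :: complex poly)"
    using insert by (simp only: prod.insert[OF insert.hyps]) (rule degree_mult_le)
  also have "\<dots> \<le> 1 + card A" using insert by (intro add_mono) auto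
  finally show ?case using insert by simp
qed

lemma poly_prod_lin: "poly (\<Prod>j\<in>A. [:1, - y j:]) (t::complex) = (\<Prod>j\<in>A. (1 - y j * t))"
  unfolding poly_prod by (intro prod.cong) (auto simp: mult.commute)

lemma poly_identity:
  fixes m n :: nat and a b c d :: complex and T :: "complex poly"
    and x y :: "nat \<Rightarrow> complex"
  assumes "m \<ge> 1" and "n = 2 * m + 1"
    and "degree T = n"
    and h6: "\<forall>z. poly T z = 1 - 2 * (z - d) * (\<Prod>j = 1..m. (z - x j) ^ 2)
                          / ((a - d) * (\<Prod>j = 1..m. (a - x j) ^ 2))"
    and h7: "\<forall>z. poly T z = -1 + 2 * (z - a) * (z - b) * (z - c) * (\<Prod>j = 1..m-1. (z - y j) ^ 2)
                          / ((d - a) * (d - b) * (d - c) * (\<Prod>j = 1..m-1. (d - y j) ^ 2))"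
  shows "\<exists>cc. cc \<noteq> 0 \<and> smult cc ([:1,-a:] * [:1,-b:] * [:1,-c:] * (\<Prod>j = 1..m-1. [:1, - y j:])^2
         - [:1,-d:] * (\<Prod>j = 1..m. [:1, - x j:])^2) = monom 2 n"
proof -
  define c1 where "c1 = -2 / ((a - d) * (\<Prod>j = 1..m. (a - x j) ^ 2))"
  define c2 where "c2 = 2 / ((d - a) * (d - b) * (d - c) * (\<Prod>j = 1..m-1. (d - y j) ^ 2))"
  let ?Q = "(\<Prod>j = 1..m-1. [:1, - y j:]) :: complex poly"
  let ?P = "(\<Prod>j = 1..m. [:1, - x j:]) :: complex poly"
  have T1: "poly T z = 1 + c1 * ((z - d) * (\<Prod>j = 1..m. (z - x j) ^ 2))" for z
    using h6 unfolding c1_def by (simp add: field_simps)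
  have T2: "poly T z = -1 + c2 * ((z - a) * (z - b) * (z - c) * (\<Prod>j = 1..m-1. (z - y j) ^ 2))" for z
    using h7 unfolding c2_def by (simp add: field_simps)
  have c1nz: "c1 \<noteq> 0"
  proof
    assume "c1 = 0"
    then have "poly T = poly [:1:]" using T1 by (auto simp: fun_eq_iff)
    then have "T = [:1:]" by (simp add: poly_eq_poly_eq_iff)
    then show False using assms(2,3) by simp
  qed
  have c2nz: "c2 \<noteq> 0"
  proof
    assume "c2 = 0"
    then have "poly T = poly [:-1:]" using T2 by (auto simp: fun_eq_iff)
    then have "T = [:-1:]" by (simp add: poly_eq_poly_eq_iff)
    then show False using assms(2,3) by simp
  qed
  have E1: "t^n * (poly T (1/t) - 1) = c1 * poly ([:1,-d:] * ?P^2) t" if "t \<noteq> 0" for t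
  proof -
    have "t^n * (poly T (1/t) - 1) = c1 * ((t * (1/t - d)) * (t^(2*card {1..m}) * (\<Prod>j = 1..m. (1/t - x j) ^ 2)))"
      unfolding T1 using assms(2) by (simp add: power_add algebra_simps)
    also have "\<dots> = c1 * poly ([:1,-d:] * ?P^2) t"
      unfolding refl_prod[OF that finite_atLeastAtMost] using that
      by (simp add: poly_prod_lin field_simps del: poly_prod)
    finally show ?thesis .
  qed
  have E2: "t^n * (poly T (1/t) + 1) = c2 * poly ([:1,-a:] * [:1,-b:] * [:1,-c:] * ?Q^2) t" if "t \<noteq> 0" for t
  proof -
    have n: "n = 3 + 2 * card {1..m-1}" using assms(1,2) by simp
    have tn: "t^n = t*t*t*t^(2*card {1..m-1})" unfolding n by (simp add: power_add numeral_3_eq_3)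
    have "poly T (1/t) + 1 = c2 * ((1/t - a) * (1/t - b) * (1/t - c) * (\<Prod>j = 1..m-1. (1/t - y j) ^ 2))"
      unfolding T2 by simp
    then have "t^n * (poly T (1/t) + 1) = c2 * ((t * (1/t - a)) * (t * (1/t - b)) * (t * (1/t - c))
          * (t^(2*card {1..m-1}) * (\<Prod>j = 1..m-1. (1/t - y j) ^ 2)))"
      by (simp only: tn mult.assoc mult.left_commute mult.commute)
    also have "\<dots> = c2 * poly ([:1,-a:] * [:1,-b:] * [:1,-c:] * ?Q^2) t"
      unfolding refl_prod[OF that finite_atLeastAtMost] using that
      by (simp add: poly_prod_lin field_simps del: poly_prod)
    finally show ?thesis .
  qed
  have PI: "smult c2 ([:1,-a:] * [:1,-b:] * [:1,-c:] * ?Q^2) - smult c1 ([:1,-d:] * ?P^2) = monom 2 n"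
  proof (rule poly_eq_nonzero)
    fix t :: complex assume t: "t \<noteq> 0"
    have "poly (smult c2 ([:1,-a:] * [:1,-b:] * [:1,-c:] * ?Q^2) - smult c1 ([:1,-d:] * ?P^2)) t
      = t^n * (poly T (1/t) + 1) - t^n * (poly T (1/t) - 1)"
      using E1[OF t] E2[OF t] by simp
    also have "\<dots> = poly (monom 2 n) t" by (simp add: poly_monom algebra_simps)
    finally show "poly (smult c2 ([:1,-a:] * [:1,-b:] * [:1,-c:] * ?Q^2) - smult c1 ([:1,-d:] * ?P^2)) t = poly (monom 2 n) t" .
  qed
  have "poly (smult c2 ([:1,-a:] * [:1,-b:] * [:1,-c:] * ?Q^2) - smult c1 ([:1,-d:] * ?P^2)) 0 = poly (monom 2 n) 0"
    by (simp only: PI)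
  then have "c2 = c1" using assms(2) by (simp add: poly_prod poly_monom)
  then show ?thesis using PI c1nz by (intro exI[of _ c1]) (simp add: smult_diff_right)
qed

definition sb :: "complex fps \<Rightarrow> nat \<Rightarrow> bool" where
  "sb f p \<longleftrightarrow> (\<forall>k>p. f $ k = 0)"

lemma sb_mult: assumes "sb f p" "sb g q" shows "sb (f * g) (p + q)"
  unfolding sb_def
proof (intro allI impI)
  fix k assume k: "k > p + q"
  have "(f * g) $ k = (\<Sum>i=0..k. f $ i * g $ (k - i))" by (rule fps_mult_nth)
  also have "\<dots> = 0"
  proof (rule sum.neutral, intro ballI)
    fix i assume "i \<in> {0..k}"
    show "f $ i * g $ (k - i) = 0"
    proof (cases "i > p")
      case True then show ?thesis using assms(1) unfolding sb_def by simp
    next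
      case False then have "k - i > q" using k by linarith
      then show ?thesis using assms(2) unfolding sb_def by simp
    qed
  qed
  finally show "(f * g) $ k = 0" .
qed

lemma sb_mono: "sb f p \<Longrightarrow> p \<le> q \<Longrightarrow> sb f q"
  unfolding sb_def by auto

lemma sb_diff: "sb f p \<Longrightarrow> sb g p \<Longrightarrow> sb (f - g) p"
  unfolding sb_def by auto

lemma sb_poly: "degree p \<le> q \<Longrightarrow> sb (fps_of_poly p) q"
  unfolding sb_def by (auto intro: coeff_eq_0)

lemma low_split: "(\<forall>k<n. f $ k = 0) \<Longrightarrow> f = fps_X^n * fps_shift n f"
  by (intro fps_ext) (auto simp: fps_X_power_mult_nth)

lemma low_high_zero: assumes "sb f p" "p < n" "f = fps_X^n * g" shows "f = 0"
proof (rule fps_ext)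
  fix k show "f $ k = 0 $ k"
  proof (cases "k < n")
    case True then show ?thesis using assms(3) by (simp add: fps_X_power_mult_nth)
  next
    case False then show ?thesis using assms(1,2) unfolding sb_def by simp
  qed
qed

lemma Lf_poly: "Lf r = fps_of_poly [:1, -r:]"
  by (simp add: Lf_def fps_of_poly_linear')

lemma main_fps:
  fixes m n :: nat and a b c d cc :: complex and x y :: "nat \<Rightarrow> complex"
  defines "Qs \<equiv> (\<Prod>j = 1..m-1. [:1, - y j:])"
      and "Ps \<equiv> (\<Prod>j = 1..m. [:1, - x j:])"
      and "h3 \<equiv> [:1,-a:] * [:1,-b:] * [:1,-c:]"
      and "h1 \<equiv> [:1,-d:]"
  assumes m: "m \<ge> 1" and n: "n = 2 * m + 1" and cc: "cc \<noteq> 0"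
      and PI: "smult cc (h3 * Qs^2 - h1 * Ps^2) = monom 2 n"
  shows "(\<forall>k. m+2 \<le> k \<and> k \<le> 2*m \<longrightarrow> (Gf (psum a b c d) * fps_of_poly Qs) $ k = 0)
       \<and> (\<forall>W. sb W (m-1) \<and> W $ 0 = 0 \<and> (\<forall>k. m+2 \<le> k \<and> k \<le> 2*m \<longrightarrow> (W * Gf (psum a b c d)) $ k = 0) \<longrightarrow> W = 0)"
proof -
  define G where "G = Gf (psum a b c d)"
  define Q where "Q = fps_of_poly Qs"
  define P where "P = fps_of_poly Ps"
  define Y where "Y = fps_of_poly (h1 * Ps)"
  define X where "X = G * Q"
  define c' where "c' = 2 / cc"
  have c'nz: "c' \<noteq> 0" using cc by (simp add: c'_def)
  have Dp: "h3 * Qs^2 - h1 * Ps^2 = monom c' n"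
  proof -
    have "h3 * Qs^2 - h1 * Ps^2 = smult (1/cc) (smult cc (h3 * Qs^2 - h1 * Ps^2))" using cc by simp
    also have "\<dots> = monom c' n" unfolding PI by (simp add: smult_monom c'_def)
    finally show ?thesis .
  qed
  have degQ: "degree Qs \<le> m - 1" unfolding Qs_def using deg_prod_lin[of "{1..m-1}" y] by simp
  have degP: "degree Ps \<le> m" unfolding Ps_def using deg_prod_lin[of "{1..m}" x] by simp
  have degh1: "degree h1 \<le> 1" unfolding h1_def by simp
  have degh3: "degree h3 \<le> 3" unfolding h3_def
    by (rule order.trans[OF degree_mult_le]) (auto intro: order.trans[OF degree_mult_le] add_mono)
  have Q0: "Q $ 0 = 1" unfolding Q_def Qs_def by (simp add: poly_0_coeff_0[symmetric] poly_prod)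
  have Y0: "Y $ 0 = 1" unfolding Y_def Ps_def h1_def by (simp add: poly_0_coeff_0[symmetric] poly_prod)
  have G0: "G $ 0 = 1" unfolding G_def Gf_def by (simp add: Fk_def)
  have GG: "G * G = fps_of_poly (h3 * h1)"
    unfolding G_def G_sq Lf_poly h1_def h3_def by (simp add: fps_of_poly_mult)
  have "X * X - Y * Y = fps_of_poly (h1 * (h3 * Qs^2 - h1 * Ps^2))"
  proof -
    have "X * X - Y * Y = (G * G) * Q * Q - Y * Y" unfolding X_def by (simp add: mult_ac)
    also have "\<dots> = fps_of_poly (h1 * (h3 * Qs^2 - h1 * Ps^2))"
      unfolding GG Q_def Y_def by (simp add: fps_of_poly_mult fps_of_poly_diff algebra_simps power2_eq_square)
    finally show ?thesis .
  qed
  also have "\<dots> = fps_X^n * (fps_of_poly h1 * fps_const c')"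
    unfolding Dp by (simp add: fps_of_poly_mult fps_of_poly_monom mult_ac)
  finally have XY: "X * X - Y * Y = fps_X^n * (fps_of_poly h1 * fps_const c')" .
  have XY0: "(X + Y) $ 0 \<noteq> 0" using Q0 Y0 G0 unfolding X_def by simp
  define R2 where "R2 = fps_of_poly h1 * fps_const c' * inverse (X + Y)"
  have XmY: "X - Y = fps_X^n * R2"
  proof -
    have "X - Y = (X - Y) * ((X + Y) * inverse (X + Y))" using inverse_mult_eq_1'[OF XY0] by simp
    also have "\<dots> = (X * X - Y * Y) * inverse (X + Y)" by (simp add: algebra_simps)
    finally show ?thesis unfolding XY R2_def by (simp add: mult_ac)
  qed
  have partA: "X $ k = 0" if "m+2 \<le> k" "k \<le> 2*m" for k
  proof -
    have "X = Y + fps_X^n * R2" using XmY by (simp add: algebra_simps)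
    then have e: "X $ k = Y $ k + (fps_X^n * R2) $ k" by simp
    have kn: "k < n" using that n by simp
    have z1: "(fps_X^n * R2) $ k = 0" using kn by (simp add: fps_X_power_mult_nth)
    have "degree (h1 * Ps) \<le> m + 1" using degh1 degP degree_mult_le[of h1 Ps] by simp
    then have z2: "Y $ k = 0" unfolding Y_def using that by (simp add: coeff_eq_0)
    show ?thesis using e z1 z2 by simp
  qed
  have partB: "W = 0" if W: "sb W (m-1)" "W $ 0 = 0" "\<forall>k. m+2 \<le> k \<and> k \<le> 2*m \<longrightarrow> (W * G) $ k = 0" for W
  proof -
    define Af where "Af = Abs_fps (\<lambda>k. if k \<le> m+1 then (W * G) $ k else 0)"
    define R1 where "R1 = fps_shift n (W * G - Af)"
    have "W * G - Af = fps_X^n * R1" unfolding R1_def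
      by (rule low_split) (use W(3) n in \<open>auto simp: Af_def\<close>)
    have sbAf: "sb Af (m+1)" unfolding sb_def Af_def by simp
    have sbQ: "sb Q (m-1)" unfolding Q_def using degQ by (rule sb_poly)
    have sbY: "sb Y (m+1)" unfolding Y_def
      by (rule sb_poly) (use degh1 degP degree_mult_le[of h1 Ps] in simp)
    have sbP: "sb P m" unfolding P_def using degP by (rule sb_poly)
    have sbH3: "sb (fps_of_poly h3) 3" using degh3 by (rule sb_poly)
    have e1: "W * Y - Q * Af = fps_X^n * (Q * R1 - W * R2)"
    proof -
      have Ye: "Y = G * Q - fps_X^n * R2" using XmY unfolding X_def by (simp add: algebra_simps)
      have Ae: "Af = W * G - fps_X^n * R1" using \<open>W * G - Af = fps_X^n * R1\<close> by (simp add: algebra_simps)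
      have "W * Y - Q * Af = W * (G * Q - fps_X^n * R2) - Q * (W * G - fps_X^n * R1)"
        by (simp only: Ye Ae)
      also have "\<dots> = fps_X^n * (Q * R1 - W * R2)" by (simp add: algebra_simps)
      finally show ?thesis .
    qed
    have "sb (W * Y - Q * Af) (2*m)"
    proof (rule sb_diff)
      show "sb (W * Y) (2*m)" using sb_mult[OF W(1) sbY] m by (auto intro: sb_mono)
      show "sb (Q * Af) (2*m)" using sb_mult[OF sbQ sbAf] m by (auto intro: sb_mono)
    qed
    then have "W * Y - Q * Af = 0" using e1 n by (intro low_high_zero) auto
    then have WY: "W * Y = Q * Af" by simp
    have YP: "Y * P = fps_of_poly h3 * Q * Q - fps_const c' * fps_X^n"
    proof -
      have "fps_of_poly (h1 * Ps^2) = fps_of_poly (h3 * Qs^2) - fps_of_poly (monom c' n)"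
        using Dp by (simp add: fps_of_poly_diff[symmetric] algebra_simps)
      then show ?thesis unfolding Y_def P_def Q_def
        by (simp add: fps_of_poly_mult fps_of_poly_monom power2_eq_square mult_ac)
    qed
    define Z where "Z = W * fps_of_poly h3 * Q - Af * P"
    have e2: "fps_const c' * fps_X^n * W = Q * Z"
    proof -
      have "W * (Y * P) = Q * Af * P" using WY by (simp add: mult_ac)
      then show ?thesis unfolding YP Z_def by (simp add: algebra_simps)
    qed
    have sbZ: "sb Z n"
    proof -
      have "sb (W * fps_of_poly h3 * Q) (m - 1 + 3 + (m - 1))" by (intro sb_mult W(1) sbH3 sbQ)
      moreover have "sb (Af * P) (m + 1 + m)" by (intro sb_mult sbAf sbP)
      ultimately show ?thesis unfolding Z_def using m n by (intro sb_diff) (auto intro: sb_mono)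
    qed
    have Zlow: "Z = fps_X^n * (fps_const c' * W * inverse Q)"
    proof -
      have "Z = (inverse Q * Q) * Z" using inverse_mult_eq_1[of Q] Q0 by simp
      also have "\<dots> = inverse Q * (fps_const c' * fps_X^n * W)" unfolding e2 by (simp add: mult_ac)
      finally show ?thesis by (simp add: mult_ac)
    qed
    have Zc: "Z = fps_const (Z $ n) * fps_X^n"
    proof (rule fps_ext)
      fix k
      show "Z $ k = (fps_const (Z $ n) * fps_X^n) $ k"
      proof (cases "k < n")
        case True then show ?thesis by (subst Zlow) (simp add: fps_X_power_mult_nth fps_X_power_nth)
      next
        case False then show ?thesis using sbZ unfolding sb_def
          by (cases "k = n") (auto simp: fps_X_power_nth)
      qed
    qed
    have "fps_X^n * (fps_const c' * W) = fps_X^n * (fps_const (Z $ n) * Q)"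
      using e2 Zc by (metis mult.assoc mult.commute)
    then have e3: "fps_const c' * W = fps_const (Z $ n) * Q" by simp
    then have "(fps_const c' * W) $ 0 = (fps_const (Z $ n) * Q) $ 0" by simp
    then have "Z $ n = 0" using W(2) Q0 by simp
    then have "fps_const c' * W = 0" using e3 by simp
    then show "W = 0" using c'nz by simp
  qed
  show ?thesis using partA partB unfolding X_def G_def Q_def by auto
qed

lemma sum_shift:
  fixes f :: "nat \<Rightarrow> complex"
  assumes "\<forall>j>\<mu>. f j = 0" "\<mu> \<le> k"
  shows "(\<Sum>j=0..k. f j) = f 0 + (\<Sum>c<\<mu>. f (Suc c))"
proof -
  have "(\<Sum>j=0..k. f j) = (\<Sum>j<Suc \<mu>. f j)"
    by (rule sum.mono_neutral_right) (use assms in auto)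
  also have "\<dots> = f 0 + (\<Sum>c<\<mu>. f (Suc c))" by (rule sum.lessThan_Suc_shift)
  finally show ?thesis .
qed

lemma order_prod_lin:
  assumes "finite A"
  shows "order z (\<Prod>j\<in>A. [:- y j, 1:] :: complex poly) = card {j\<in>A. y j = z}"
  using assms
proof (induction A rule: finite_induct)
  case empty then show ?case by (simp add: order_0I)
next
  case (insert i A)
  have nz: "(\<Prod>j\<in>insert i A. [:- y j, 1:] :: complex poly) \<noteq> 0"
  proof -
    have "[:- y j, 1:] \<noteq> (0::complex poly)" for j by simp
    then show ?thesis by (simp only: prod_zero_iff[OF finite.insertI[OF insert.hyps(1)]]) blast
  qed
  have "order z (\<Prod>j\<in>insert i A. [:- y j, 1:] :: complex poly)
      = order z [:- y i, 1:] + order z (\<Prod>j\<in>A. [:- y j, 1:] :: complex poly)"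
    using nz unfolding prod.insert[OF insert.hyps] by (rule order_mult)
  also have "order z [:- y i, 1:] = (if y i = z then 1 else 0)"
  proof (cases "y i = z")
    case True then show ?thesis using order_power_n_n[of z 1] by simp
  next
    case False then have "order z [:- y i, 1:] = 0" by (intro order_0I) simp
    then show ?thesis using False by simp
  qed
  also have "card {j\<in>insert i A. y j = z} = (if y i = z then 1 else 0) + card {j\<in>A. y j = z}"
  proof (cases "y i = z")
    case True
    then have "{j\<in>insert i A. y j = z} = insert i {j\<in>A. y j = z}" by auto
    then show ?thesis using True insert by simp
  next
    case False
    then have "{j\<in>insert i A. y j = z} = {j\<in>A. y j = z}" by auto
    then show ?thesis using False by simp
  qed
  ultimately show ?case using insert by simp
qed

lemma reflect_Q:
  fixes y :: "nat \<Rightarrow> complex" and \<mu> :: nat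
  defines "Qs \<equiv> (\<Prod>j = 1..\<mu>. [:1, - y j:])"
  shows "(\<Sum>i\<le>\<mu>. monom (coeff Qs i) (\<mu> - i)) = (\<Prod>j = 1..\<mu>. [:- y j, 1:])"
proof (rule poly_eq_nonzero)
  fix z :: complex assume z: "z \<noteq> 0"
  have degQ: "degree Qs \<le> \<mu>" unfolding Qs_def using deg_prod_lin[of "{1..\<mu>}" y] by simp
  have "poly Qs (1/z) = (\<Sum>i\<le>\<mu>. coeff Qs i * (1/z)^i)"
    by (subst poly_as_sum_of_monoms'[OF degQ, symmetric]) (simp add: poly_sum poly_monom)
  then have "z^\<mu> * poly Qs (1/z) = (\<Sum>i\<le>\<mu>. coeff Qs i * (z^\<mu> * (1/z)^i))"
    by (simp add: sum_distrib_left mult_ac)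
  also have "\<dots> = (\<Sum>i\<le>\<mu>. coeff Qs i * z^(\<mu> - i))"
    by (intro sum.cong refl) (use z in \<open>simp add: power_diff power_one_over\<close>)
  also have "\<dots> = poly (\<Sum>i\<le>\<mu>. monom (coeff Qs i) (\<mu> - i)) z"
    by (simp add: poly_sum poly_monom)
  finally have e1: "poly (\<Sum>i\<le>\<mu>. monom (coeff Qs i) (\<mu> - i)) z = z^\<mu> * poly Qs (1/z)" ..
  have "z^\<mu> * poly Qs (1/z) = (\<Prod>j = 1..\<mu>. z) * (\<Prod>j = 1..\<mu>. (1 - y j * (1/z)))"
    unfolding Qs_def poly_prod_lin by simp
  also have "\<dots> = (\<Prod>j = 1..\<mu>. z * (1 - y j * (1/z)))" by (rule prod.distrib[symmetric])
  also have "\<dots> = (\<Prod>j = 1..\<mu>. z - y j)" by (intro prod.cong refl) (use z in \<open>simp add: field_simps\<close>)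
  also have "\<dots> = poly (\<Prod>j = 1..\<mu>. [:- y j, 1:]) z" by (simp add: poly_prod)
  finally show "poly (\<Sum>i\<le>\<mu>. monom (coeff Qs i) (\<mu> - i)) z = poly (\<Prod>j = 1..\<mu>. [:- y j, 1:]) z"
    using e1 by simp
qed

lemma smult_sum2: "smult c (\<Sum>i \<in> S. f i) = (\<Sum>i \<in> S. smult c (f i))"
  by (induct S rule: infinite_finite_induct) (auto simp: smult_add_right)

theorem theorem1:
  fixes m n :: nat and a b c d :: complex and T U :: "complex poly"
    and x y :: "nat \<Rightarrow> complex"
  assumes "m \<ge> 1" and "n = 2 * m + 1"
    and "degree T = n" and "degree U \<le> n - 2"
    and "T ^ 2 - [:-a, 1:] * [:-b, 1:] * [:-c, 1:] * [:-d, 1:] * U ^ 2 = 1"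
    and "\<forall>z. poly T z = 1 - 2 * (z - d) * (\<Prod>j = 1..m. (z - x j) ^ 2)
                          / ((a - d) * (\<Prod>j = 1..m. (a - x j) ^ 2))"
    and "\<forall>z. poly T z = -1 + 2 * (z - a) * (z - b) * (z - c) * (\<Prod>j = 1..m-1. (z - y j) ^ 2)
                          / ((d - a) * (d - b) * (d - c) * (\<Prod>j = 1..m-1. (d - y j) ^ 2))"
  shows "det (Fmat (psum a b c d) (m + 1) (m - 1)) \<noteq> 0
         \<and> (\<forall>z. order z (Fpoly (psum a b c d) (m + 1) (m - 1))
                 = card {j \<in> {1..m-1}. y j = z})"
proof -
  obtain cc where cc: "cc \<noteq> 0" and PI: "smult cc ([:1,-a:] * [:1,-b:] * [:1,-c:] * (\<Prod>j = 1..m-1. [:1, - y j:])^2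
         - [:1,-d:] * (\<Prod>j = 1..m. [:1, - x j:])^2) = monom 2 n"
    using poly_identity[OF assms(1,2,3,6,7)] by blast
  note MF = main_fps[OF assms(1) assms(2) cc PI]
  let ?s = "psum a b c d"
  define Qs :: "complex poly" where "Qs = (\<Prod>j = 1..m-1. [:1, - y j:])"
  define q where "q i = coeff Qs i" for i
  define A where "A = Fmat ?s (m+1) (m-1)"
  have Acar: "A \<in> carrier_mat (m-1) (m-1)" by (simp add: A_def Fmat_def)
  have degQ: "degree Qs \<le> m - 1" unfolding Qs_def using deg_prod_lin[of "{1..m-1}" y] by simp
  have qhigh: "\<forall>j>m-1. q j = 0" unfolding q_def using degQ by (auto intro: coeff_eq_0)
  have q0: "q 0 = 1" unfolding q_def Qs_def by (simp add: poly_0_coeff_0[symmetric] poly_prod)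
  have partA: "(\<Sum>j=0..k. q j * Fk ?s (int (k-j))) = 0" if "m+2 \<le> k" "k \<le> 2*m" for k
  proof -
    have "(Gf ?s * fps_of_poly Qs) $ k = 0" using MF that unfolding Qs_def by blast
    then have "(fps_of_poly Qs * Gf ?s) $ k = 0" by (simp only: mult.commute)
    then show ?thesis by (simp add: fps_mult_nth Gf_def q_def)
  qed
  have Arow: "(A *\<^sub>v v) $v r = (\<Sum>c<m-1. Fk ?s (int (m + 1 + r - c)) * v $v c)"
    if "r < m - 1" "dim_vec v = m - 1" for r v
  proof -
    have "(A *\<^sub>v v) $v r = (\<Sum>c\<in>{0..<m-1}. Fk ?s (int (m + 1) + int r - int c) * v $v c)"
      using that Acar by (simp add: A_def Fmat_def scalar_prod_def)
    also have "\<dots> = (\<Sum>c<m-1. Fk ?s (int (m + 1 + r - c)) * v $v c)"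
    proof (intro sum.cong)
      show "{0..<m-1} = {..<m-1}" by auto
      fix c assume "c \<in> {..<m-1}"
      then have "int (m + 1) + int r - int c = int (m + 1 + r - c)" by (subst of_nat_diff) auto
      then show "Fk ?s (int (m + 1) + int r - int c) * v $v c = Fk ?s (int (m + 1 + r - c)) * v $v c" by simp
    qed
    finally show ?thesis .
  qed
  define qv where "qv = vec (m-1) (\<lambda>c. q (Suc c))"
  have qv: "qv \<in> carrier_vec (m-1)" by (simp add: qv_def)
  have Aq: "A *\<^sub>v qv = vec (m-1) (\<lambda>r. - Fk ?s (int (m+1) + int r + 1))"
  proof (rule eq_vecI)
    show "dim_vec (A *\<^sub>v qv) = dim_vec (vec (m-1) (\<lambda>r. - Fk ?s (int (m+1) + int r + 1)))"
      using Acar by simp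
    fix r assume "r < dim_vec (vec (m-1) (\<lambda>r. - Fk ?s (int (m+1) + int r + 1)))"
    then have r: "r < m - 1" by simp
    define k where "k = m + 2 + r"
    have k1: "m+2 \<le> k" "k \<le> 2*m" using r unfolding k_def by auto
    have "0 = (\<Sum>j=0..k. q j * Fk ?s (int (k-j)))" using partA[OF k1] by simp
    also have "\<dots> = q 0 * Fk ?s (int (k - 0)) + (\<Sum>c<m-1. q (Suc c) * Fk ?s (int (k - Suc c)))"
      by (rule sum_shift) (use qhigh k1 in auto)
    finally have e0: "0 = q 0 * Fk ?s (int (k - 0)) + (\<Sum>c<m-1. q (Suc c) * Fk ?s (int (k - Suc c)))" .
    have e: "(\<Sum>c<m-1. q (Suc c) * Fk ?s (int (k - Suc c))) = - Fk ?s (int k)"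
      using e0 q0 by (metis add.commute eq_neg_iff_add_eq_0 minus_nat.diff_0 mult_1 add.right_neutral)
    have "(A *\<^sub>v qv) $v r = (\<Sum>c<m-1. Fk ?s (int (m + 1 + r - c)) * qv $v c)"
      using Arow r by (simp add: qv_def)
    also have "\<dots> = (\<Sum>c<m-1. q (Suc c) * Fk ?s (int (k - Suc c)))"
      by (intro sum.cong refl) (simp add: qv_def k_def mult.commute)
    also have "\<dots> = - Fk ?s (int k)" by (rule e)
    also have "\<dots> = - Fk ?s (int (m+1) + int r + 1)" by (simp add: k_def add_ac)
    finally show "(A *\<^sub>v qv) $v r = vec (m-1) (\<lambda>r. - Fk ?s (int (m+1) + int r + 1)) $v r"
      using r by simp
  qed
  have col: "det (Fmat_col ?s (m+1) (m-1) i) = q i * det A" if "1 \<le> i" "i \<le> m - 1" for i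
  proof -
    have "Fmat_col ?s (m+1) (m-1) i = replace_col A (A *\<^sub>v qv) (i-1)"
      unfolding Aq using that by (intro eq_matI) (auto simp: replace_col_def A_def Fmat_def Fmat_col_def)
    also have "det \<dots> = qv $v (i - 1) * det A" using that by (intro cramer_lemma_mat[OF Acar qv]) auto
    finally show ?thesis using that by (simp add: qv_def)
  qed
  have Fp: "Fpoly ?s (m+1) (m-1) = smult (det A) (\<Prod>j = 1..m-1. [:- y j, 1:])"
  proof -
    have cs: "(\<Sum>i = 1..m-1. monom (det (Fmat_col ?s (m+1) (m-1) i)) (m - 1 - i)) = (\<Sum>i = 1..m-1. monom (det A * q i) (m - 1 - i))"
    proof (intro sum.cong refl)
      fix i assume "i \<in> {1..m-1}"
      then have "det (Fmat_col ?s (m+1) (m-1) i) = q i * det A" using col by simp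
      then show "monom (det (Fmat_col ?s (m+1) (m-1) i)) (m - 1 - i) = monom (det A * q i) (m - 1 - i)"
        by (simp only: mult.commute)
    qed
    have "Fpoly ?s (m+1) (m-1) = monom (det A * q 0) (m - 1 - 0) + (\<Sum>i = 1..m-1. monom (det A * q i) (m - 1 - i))"
      unfolding Fpoly_def A_def[symmetric] cs q0 by simp
    also have "\<dots> = (\<Sum>i\<le>m-1. monom (det A * q i) (m - 1 - i))"
    proof -
      have "{..m-1} = insert 0 {1..m-1}" by auto
      then show ?thesis by simp
    qed
    also have "\<dots> = smult (det A) (\<Sum>i\<le>m-1. monom (coeff Qs i) (m - 1 - i))"
      by (simp add: smult_sum2 smult_monom q_def)
    also have "(\<Sum>i\<le>m-1. monom (coeff Qs i) (m - 1 - i)) = (\<Prod>j = 1..m-1. [:- y j, 1:])"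
      unfolding Qs_def by (rule reflect_Q)
    finally show ?thesis .
  qed
  have detA: "det A \<noteq> 0"
  proof
    assume "det A = 0"
    then obtain v where v: "v \<in> carrier_vec (m-1)" "v \<noteq> 0\<^sub>v (m-1)" "A *\<^sub>v v = 0\<^sub>v (m-1)"
      using det_0_iff_vec_prod_zero_field[OF Acar] by blast
    define W where "W = Abs_fps (\<lambda>k. if 1 \<le> k \<and> k \<le> m - 1 then v $v (k - 1) else 0)"
    have W1: "sb W (m-1)" unfolding sb_def W_def by simp
    have W2: "W $ 0 = 0" unfolding W_def by simp
    have W3: "\<forall>k. m+2 \<le> k \<and> k \<le> 2*m \<longrightarrow> (W * Gf ?s) $ k = 0"
    proof (intro allI impI)
      fix k assume k: "m+2 \<le> k \<and> k \<le> 2*m"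
      define r where "r = k - (m + 2)"
      have r: "r < m - 1" using k unfolding r_def by auto
      have "(W * Gf ?s) $ k = (\<Sum>j=0..k. W $ j * Fk ?s (int (k - j)))"
        by (simp add: fps_mult_nth Gf_def)
      also have "\<dots> = W $ 0 * Fk ?s (int (k - 0)) + (\<Sum>c<m-1. W $ Suc c * Fk ?s (int (k - Suc c)))"
        by (rule sum_shift) (use k in \<open>auto simp: W_def\<close>)
      also have "\<dots> = (\<Sum>c<m-1. Fk ?s (int (m + 1 + r - c)) * v $v c)"
      proof -
        have "(\<Sum>c<m-1. W $ Suc c * Fk ?s (int (k - Suc c))) = (\<Sum>c<m-1. Fk ?s (int (m + 1 + r - c)) * v $v c)"
          by (intro sum.cong refl) (use k in \<open>auto simp: W_def r_def mult.commute\<close>)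
        then show ?thesis using W2 by simp
      qed
      also have "\<dots> = (A *\<^sub>v v) $v r" using Arow[OF r] v(1) by simp
      also have "\<dots> = 0" using v(3) r by simp
      finally show "(W * Gf ?s) $ k = 0" .
    qed
    have "W = 0" using MF W1 W2 W3 by blast
    have "v $v c = 0" if "c < m - 1" for c
    proof -
      have "W $ Suc c = v $v c" using that by (simp add: W_def)
      then show ?thesis using \<open>W = 0\<close> by simp
    qed
    then have "v = 0\<^sub>v (m-1)" using v(1) by (intro eq_vecI) auto
    then show False using v(2) by simp
  qed
  show ?thesis
    using detA unfolding A_def[symmetric] Fp
    by (simp add: order_smult order_prod_lin)
qed

end
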